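(* Let $N\ge 2$, $k=2$, $T=2$, and suppose $p_{11}\ge p_{01}$. Then for every initial belief vector $\omega(1)=(\omega_1,\dots,\omega_N)\in[0,1]^N$, the myopic sensing policy (with any tie-breaking) is optimal. That is, its expected total reward over the two slots equals the maximum expected total reward over the two slots achievable by any sensing policy.
   Context: Opportunistic spectrum access model. There are $N$ channels. The state $S_i(t)\in\{0,1\}$ of channel $i$ in slot $t$ (0 = busy, 1 = idle) evolves as a two-state discrete-time Markov chain with transition probabilities $p_{ij}=\Pr(S_i(t+1)=j\mid S_i(t)=i)$. The chains are independent across channels and all have the same transition probabilities $p_{01},p_{11}\in[0,1]$. The initial states are independent with $\Pr(S_i(1)=1)=\omega_i(1)$. In each slot $t=1,\dots,T$, a secondary user chooses a set $\mathcal{A}(t)$ of exactly $k$ channels to sense, based on past actions and observations. It observes the states of the sensed channels and obtains reward $1$ if at least one sensed channel is idle, and reward $0$ otherwise. The belief $\omega_i(t)$ is the conditional probability that $S_i(t)=1$ given past actions and observations. The expected immediate reward of action $\mathcal{A}(t)$ is $1-\prod_{i\in\mathcal{A}(t)}(1-\omega_i(t))$. Beliefs update as follows: $\omega_i(t+1)=p_{11}$ if $i\in\mathcal{A}(t)$ and $S_i(t)=1$; $\omega_i(t+1)=p_{01}$ if $i\in\mathcal{A}(t)$ and $S_i(t)=0$; and $\omega_i(t+1)=\tau(\omega_i(t))$ if $i\notin\mathcal{A}(t)$, where $\tau(\omega)=\omega p_{11}+(1-\omega)p_{01}$. A policy maps histories to actions. The objective is to maximize the expected total (equivalently, average) reward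 over slots $1,\dots,T$. The myopic sensing policy senses, in every slot, $k$ channels with the largest current beliefs $\omega_i(t)$, i.e. it maximizes the immediate expected reward. *)

theory Defs
  imports Main "HOL-Library.FuncSet" Complex_Main
begin

text \<open>In the two-slot problem (T = 2) a
  (deterministic, history-dependent) policy is a pair (A1, f): A1 is the set
  sensed in slot 1, and f maps the slot-1 observation (the set S of channels in A1
  that were observed idle; the rest of A1 were observed busy) to the set sensed in slot 2.\<close>

definition valid_action :: "nat \<Rightarrow> nat \<Rightarrow> nat set \<Rightarrow> bool" where
  "valid_action N k A \<longleftrightarrow> A \<subseteq> {..<N} \<and> card A = k"

definition tau :: "real \<Rightarrow> real \<Rightarrow> real \<Rightarrow> real" where
  "tau p01 p11 w = w * p11 + (1 - w) * p01"

definition exp_reward :: "(nat \<Rightarrow> real) \<Rightarrow> nat set \<Rightarrow> real" where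
  "exp_reward w A = 1 - (\<Prod>i\<in>A. (1 - w i))"

definition belief_update ::
  "real \<Rightarrow> real \<Rightarrow> (nat \<Rightarrow> real) \<Rightarrow> nat set \<Rightarrow> nat set \<Rightarrow> nat \<Rightarrow> real" where
  "belief_update p01 p11 w A S i =
     (if i \<in> S then p11 else if i \<in> A then p01 else tau p01 p11 (w i))"

definition obs_prob :: "(nat \<Rightarrow> real) \<Rightarrow> nat set \<Rightarrow> nat set \<Rightarrow> real" where
  "obs_prob w A S = (\<Prod>i\<in>S. w i) * (\<Prod>i\<in>A - S. (1 - w i))"

definition is_policy2 :: "nat \<Rightarrow> nat \<Rightarrow> nat set \<times> (nat set \<Rightarrow> nat set) \<Rightarrow> bool" where
  "is_policy2 N k pol \<longleftrightarrow>
     valid_action N k (fst pol) \<and> (\<forall>S. S \<subseteq> fst pol \<longrightarrow> valid_action N k (snd pol S))"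

definition value2 ::
  "real \<Rightarrow> real \<Rightarrow> (nat \<Rightarrow> real) \<Rightarrow> nat set \<times> (nat set \<Rightarrow> nat set) \<Rightarrow> real" where
  "value2 p01 p11 w pol =
     exp_reward w (fst pol) +
     (\<Sum>S\<in>Pow (fst pol). obs_prob w (fst pol) S *
        exp_reward (belief_update p01 p11 w (fst pol) S) (snd pol S))"

definition myopic_action :: "nat \<Rightarrow> nat \<Rightarrow> (nat \<Rightarrow> real) \<Rightarrow> nat set \<Rightarrow> bool" where
  "myopic_action N k w A \<longleftrightarrow>
     valid_action N k A \<and> (\<forall>i\<in>A. \<forall>j\<in>{..<N} - A. w j \<le> w i)"

definition is_myopic_policy2 ::
  "nat \<Rightarrow> nat \<Rightarrow> real \<Rightarrow> real \<Rightarrow> (nat \<Rightarrow> real) \<Rightarrow> nat set \<times> (nat set \<Rightarrow> nat set) \<Rightarrow> bool" where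
  "is_myopic_policy2 N k p01 p11 w pol \<longleftrightarrow>
     myopic_action N k w (fst pol) \<and>
     (\<forall>S. S \<subseteq> fst pol \<longrightarrow>
        myopic_action N k (belief_update p01 p11 w (fst pol) S) (snd pol S))"

end

theory Submission imports Defs begin


definition phi :: "real \<Rightarrow> real \<Rightarrow> real \<Rightarrow> real \<Rightarrow> real \<Rightarrow> real" where
 "phi q x y z1 z2 = x*y*(1 + z1*z2) + (1-x)*(1-y)*q^2 + (x*(1-y) + (1-x)*y)*q*z1"

definition U :: "real \<Rightarrow> real \<Rightarrow> real \<Rightarrow> real" where
 "U p01 p11 e = 1 - p11 + e*(p11 - p01)"

lemma phi_sym: "phi q x y z1 z2 = phi q y x z1 z2"
  unfolding phi_def by (simp add: algebra_simps)

lemma phi_mono: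
  assumes "0 \<le> x" "x \<le> 1" "0 \<le> y" "y \<le> 1" "0 \<le> q" "0 \<le> z1" "z1 \<le> z1'" "0 \<le> z2" "z2 \<le> z2'"
  shows "phi q x y z1 z2 \<le> phi q x y z1' z2'"
proof -
  have c: "0 \<le> (x*(1-y) + (1-x)*y)*q" using assms by simp
  have "z1*z2 \<le> z1'*z2'" using assms by (intro mult_mono) auto
  hence "x*y*(1 + z1*z2) \<le> x*y*(1 + z1'*z2')" using assms by (intro mult_left_mono) auto
  moreover have "(x*(1-y) + (1-x)*y)*q*z1 \<le> (x*(1-y) + (1-x)*y)*q*z1'"
    using c assms by (intro mult_left_mono) auto
  ultimately show ?thesis unfolding phi_def by linarith
qed

lemma phi_S1:
  assumes "0 \<le> x" "p \<le> P" "0 \<le> p01" "p01 \<le> p11" "p11 \<le> 1" "0 \<le> t"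
  shows "phi (1-p11) x p (U p01 p11 P) (U p01 p11 t) \<le> phi (1-p11) x P (U p01 p11 p) (U p01 p11 t)"
proof -
  let ?q = "1 - p11" and ?r = "1 - p01"
  have eq: "phi ?q x P (U p01 p11 p) (U p01 p11 t) - phi ?q x p (U p01 p11 P) (U p01 p11 t)
      = (P - p) * x * (1 - ?q * ?r + ?q * U p01 p11 t)"
    unfolding phi_def U_def by (simp add: algebra_simps power2_eq_square)
  have "?q * ?r \<le> 1" using assms by (intro mult_le_one) auto
  moreover have "0 \<le> ?q * U p01 p11 t" unfolding U_def using assms by simp
  ultimately have "0 \<le> (P - p) * x * (1 - ?q * ?r + ?q * U p01 p11 t)"
    using assms by simp
  with eq show ?thesis by linarith
qed

lemma phi_S2:
  assumes "X \<le> 1" "0 \<le> X" "p \<le> P" "0 \<le> p01" "p01 \<le> p11" "p11 \<le> 1" "0 \<le> z"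
  shows "phi (1-p11) p X (U p01 p11 z) (U p01 p11 P) \<le> phi (1-p11) P X (U p01 p11 z) (U p01 p11 p)"
proof -
  let ?q = "1 - p11"
  have eq: "phi ?q P X (U p01 p11 z) (U p01 p11 p) - phi ?q p X (U p01 p11 z) (U p01 p11 P)
      = (P - p) * (X + ?q * (1 - X) * (z * (p11 - p01)))"
    unfolding phi_def U_def by (simp add: algebra_simps power2_eq_square)
  have "0 \<le> ?q * (1 - X) * (z * (p11 - p01))" using assms by simp
  hence "0 \<le> (P - p) * (X + ?q * (1 - X) * (z * (p11 - p01)))" using assms by simp
  with eq show ?thesis by linarith
qed

lemma phi_S3:
  assumes "0 \<le> x" "x \<le> 1" "0 \<le> y" "y \<le> 1" "a \<le> b" "p01 \<le> p11" "p11 \<le> 1"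
  shows "phi (1-p11) x y (U p01 p11 a) (U p01 p11 b) \<le> phi (1-p11) x y (U p01 p11 b) (U p01 p11 a)"
proof -
  have eq: "phi (1-p11) x y (U p01 p11 b) (U p01 p11 a) - phi (1-p11) x y (U p01 p11 a) (U p01 p11 b)
     = (x*(1-y) + (1-x)*y) * (1-p11) * ((b - a) * (p11 - p01))"
    unfolding phi_def U_def by (simp add: algebra_simps)
  have "0 \<le> (x*(1-y) + (1-x)*y) * (1-p11) * ((b - a) * (p11 - p01))" using assms by simp
  with eq show ?thesis by linarith
qed



definition Ew :: "nat \<Rightarrow> (nat \<Rightarrow> real) \<Rightarrow> nat \<Rightarrow> real" where
  "Ew N w j = (if j < N then 1 - w j else 1)"

definition Pr :: "real \<Rightarrow> real \<Rightarrow> (nat \<Rightarrow> real) \<Rightarrow> nat set \<Rightarrow> (nat set \<Rightarrow> nat set) \<Rightarrow> nat set \<Rightarrow> real" where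
  "Pr p01 p11 w A f S = (\<Prod>i\<in>f S. 1 - belief_update p01 p11 w A S i)"

definition Fv :: "real \<Rightarrow> real \<Rightarrow> (nat \<Rightarrow> real) \<Rightarrow> nat \<Rightarrow> nat \<Rightarrow> (nat set \<Rightarrow> nat set) \<Rightarrow> real" where
  "Fv p01 p11 w a b f = (1 - w a)*(1 - w b)
     + w a * w b * Pr p01 p11 w {a,b} f {a,b}
     + w a * (1 - w b) * Pr p01 p11 w {a,b} f {a}
     + (1 - w a) * w b * Pr p01 p11 w {a,b} f {b}
     + (1 - w a) * (1 - w b) * Pr p01 p11 w {a,b} f {}"

lemma value2_eq:
  assumes "a \<noteq> b"
  shows "value2 p01 p11 w ({a,b}, f) = 2 - Fv p01 p11 w a b f"
proof -
  have P: "Pow {a,b} = {{}, {a}, {b}, {a,b}}" by blast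
  have d: "{a} - {a} = {}" "{a,b} - {a} = {b}" "{a,b} - {b} = {a}" "{a,b} - {} = {a,b}" "{a,b} - {a,b} = {}"
    using assms by auto
  show ?thesis
    unfolding value2_def fst_conv snd_conv P Fv_def Pr_def exp_reward_def obs_prob_def
    using assms by (simp add: d algebra_simps insert_commute)
qed

lemma top2:
  assumes "myopic_action N 2 v C" "valid_action N 2 D" "\<forall>i<N. v i \<le> 1"
  shows "(\<Prod>i\<in>C. 1 - v i) \<le> (\<Prod>i\<in>D. 1 - v i)"
proof -
  obtain c1 c2 where C: "C = {c1,c2}" "c1 \<noteq> c2"
    using assms(1) unfolding myopic_action_def valid_action_def by (metis card_2_iff)
  obtain d1 d2 where D: "D = {d1,d2}" "d1 \<noteq> d2"
    using assms(2) unfolding valid_action_def by (metis card_2_iff)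
  have CN: "c1 < N" "c2 < N" using assms(1) C unfolding myopic_action_def valid_action_def by auto
  have DN: "d1 < N" "d2 < N" using assms(2) D unfolding valid_action_def by auto
  have le: "\<And>i j. i \<in> C \<Longrightarrow> j < N \<Longrightarrow> j \<notin> C \<Longrightarrow> v j \<le> v i"
    using assms(1) unfolding myopic_action_def by auto
  have nn: "\<And>i. i < N \<Longrightarrow> 0 \<le> 1 - v i" using assms(3) by auto
  have pc: "(\<Prod>i\<in>C. 1 - v i) = (1 - v c1) * (1 - v c2)" using C by simp
  have pd: "(\<Prod>i\<in>D. 1 - v i) = (1 - v d1) * (1 - v d2)" using D by simp
  have "(1 - v c1) * (1 - v c2) \<le> (1 - v d1) * (1 - v d2)"
  proof (cases "d1 \<in> C")
    case True
    show ?thesis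
    proof (cases "d2 \<in> C")
      case True
      with \<open>d1 \<in> C\<close> C D show ?thesis by (auto simp: mult.commute)
    next
      case False
      have a: "1 - v c1 \<le> 1 - v d2" "1 - v c2 \<le> 1 - v d2" using le[of _ d2] False DN C by auto
      have b: "0 \<le> 1 - v c1" "0 \<le> 1 - v c2" using nn CN by auto
      have "d1 = c1 \<or> d1 = c2" using \<open>d1 \<in> C\<close> C by auto
      then show ?thesis
      proof
        assume "d1 = c1" then show ?thesis using a b by (simp add: mult_left_mono)
      next
        assume "d1 = c2"
        have "(1 - v c2) * (1 - v c1) \<le> (1 - v c2) * (1 - v d2)" using a b by (simp add: mult_left_mono)
        then show ?thesis using \<open>d1 = c2\<close> by (simp add: mult.commute)
      qed
    qed
  next
    case False
    show ?thesis
    proof (cases "d2 \<in> C")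
      case True
      have a: "1 - v c1 \<le> 1 - v d1" "1 - v c2 \<le> 1 - v d1" using le[of _ d1] False DN C by auto
      have b: "0 \<le> 1 - v c1" "0 \<le> 1 - v c2" using nn CN by auto
      have "d2 = c1 \<or> d2 = c2" using True C by auto
      then show ?thesis
      proof
        assume "d2 = c2" 
        have "(1 - v c1) * (1 - v c2) \<le> (1 - v d1) * (1 - v c2)" using a b by (simp add: mult_right_mono)
        then show ?thesis using \<open>d2 = c2\<close> by simp
      next
        assume "d2 = c1"
        have "(1 - v c2) * (1 - v c1) \<le> (1 - v d1) * (1 - v c1)" using a b by (simp add: mult_right_mono)
        then show ?thesis using \<open>d2 = c1\<close> by (simp add: mult.commute)
      qed
    next
      case F2: False
      have "v d1 \<le> v c1" "v d2 \<le> v c2" using le False F2 DN C by auto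
      then show ?thesis using nn CN DN by (intro mult_mono) auto
    qed
  qed
  then show ?thesis using pc pd by simp
qed

lemma pair_lb:
  fixes h :: "'a \<Rightarrow> real"
  assumes "card D = 2" "\<forall>i\<in>D. L \<le> h i" "\<forall>i\<in>D. i \<noteq> x \<longrightarrow> M \<le> h i" "0 \<le> L" "0 \<le> M"
  shows "L * M \<le> prod h D"
proof -
  obtain d1 d2 where D: "D = {d1,d2}" "d1 \<noteq> d2" using assms(1) by (metis card_2_iff)
  show ?thesis
  proof (cases "d2 = x")
    case True
    then have "M \<le> h d1" "L \<le> h d2" using assms D by auto
    moreover have "0 \<le> h d1" using \<open>M \<le> h d1\<close> assms(5) by linarith
    ultimately have "M * L \<le> h d1 * h d2" using assms by (intro mult_mono) auto
    then show ?thesis using D by (simp add: mult.commute)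
  next
    case False
    then have "L \<le> h d1" "M \<le> h d2" using assms D by auto
    moreover have "0 \<le> h d1" using \<open>L \<le> h d1\<close> assms(4) by linarith
    ultimately have "L * M \<le> h d1 * h d2" using assms by (intro mult_mono) auto
    then show ?thesis using D by simp
  qed
qed

lemma U_mono: "p01 \<le> p11 \<Longrightarrow> a \<le> b \<Longrightarrow> U p01 p11 a \<le> U p01 p11 b"
  unfolding U_def by (simp add: mult_right_mono)

lemma U_nn: "p11 \<le> 1 \<Longrightarrow> p01 \<le> p11 \<Longrightarrow> 0 \<le> a \<Longrightarrow> 0 \<le> U p01 p11 a"
  unfolding U_def by simp

lemma U_one: "U p01 p11 1 = 1 - p01" unfolding U_def by simp

lemma bu_le1:
  assumes "0 \<le> p01" "p01 \<le> p11" "p11 \<le> 1" "0 \<le> w i" "w i \<le> 1"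
  shows "belief_update p01 p11 w A S i \<le> 1" "1 - p11 \<le> 1 - belief_update p01 p11 w A S i"
proof -
  have "tau p01 p11 (w i) \<le> p11"
  proof -
    have "w i * p11 + (1 - w i) * p01 \<le> w i * p11 + (1 - w i) * p11"
      using assms by (intro add_left_mono mult_left_mono) auto
    then show ?thesis unfolding tau_def by (simp add: algebra_simps)
  qed
  then show "belief_update p01 p11 w A S i \<le> 1" "1 - p11 \<le> 1 - belief_update p01 p11 w A S i"
    unfolding belief_update_def using assms by auto
qed

lemma bu_out:
  assumes "i \<notin> A" "S \<subseteq> A" "i < N"
  shows "1 - belief_update p01 p11 w A S i = U p01 p11 (Ew N w i)"
  using assms unfolding belief_update_def U_def Ew_def tau_def by (auto simp: algebra_simps)

lemma bu_busy:
  assumes "i \<in> A" "i \<notin> S"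
  shows "1 - belief_update p01 p11 w A S i = U p01 p11 1"
  using assms unfolding belief_update_def U_def by auto

lemma bu_idle:
  assumes "i \<in> S"
  shows "1 - belief_update p01 p11 w A S i = 1 - p11"
  using assms unfolding belief_update_def by auto

lemma upper:
  assumes ab: "a1 \<noteq> a2" "a1 < N" "a2 < N"
  and jk: "j \<noteq> k" "j \<notin> {a1,a2}" "k \<notin> {a1,a2}" "j < N+2" "k < N+2"
  and myo: "\<forall>S. S \<subseteq> {a1,a2} \<longrightarrow> myopic_action N 2 (belief_update p01 p11 w {a1,a2} S) (f S)"
  and p: "0 \<le> p01" "p01 \<le> p11" "p11 \<le> 1" and wr: "\<forall>i<N. 0 \<le> w i \<and> w i \<le> 1"
  shows "Fv p01 p11 w a1 a2 f \<le> phi (1-p11) (Ew N w a1) (Ew N w a2) (U p01 p11 (Ew N w j)) (U p01 p11 (Ew N w k))"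
proof -
  let ?A = "{a1,a2}"
  let ?h = "\<lambda>S i. 1 - belief_update p01 p11 w ?A S i"
  let ?Uj = "U p01 p11 (Ew N w j)" and ?Uk = "U p01 p11 (Ew N w k)" and ?q = "1 - p11"
  have top: "Pr p01 p11 w ?A f S \<le> prod (?h S) D" if S: "S \<subseteq> ?A" and D: "valid_action N 2 D" for S D
  proof -
    have "\<forall>i<N. belief_update p01 p11 w ?A S i \<le> 1" using bu_le1(1) p wr by auto
    then show ?thesis unfolding Pr_def using top2[OF myo[rule_format, OF S] D] by simp
  qed
  have va: "valid_action N 2 {x,y}" if "x \<noteq> y" "x < N" "y < N" for x y
    using that unfolding valid_action_def by auto
  define j1 where "j1 = (if j < N then j else a2)"
  define j2 where "j2 = (if j < N then j else a1)"
  define k2 where "k2 = (if k < N then k else a2)"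
  have Ewj: "j \<ge> N \<Longrightarrow> Ew N w j = 1" and Ewk: "k \<ge> N \<Longrightarrow> Ew N w k = 1" unfolding Ew_def by auto
  have h1: "?h {a1} j1 = ?Uj"
    using bu_out[of j ?A "{a1}" N] bu_busy[of a2 ?A "{a1}"] jk ab Ewj unfolding j1_def by auto
  have h2: "?h {a2} j2 = ?Uj"
    using bu_out[of j ?A "{a2}" N] bu_busy[of a1 ?A "{a2}"] jk ab Ewj unfolding j2_def by auto
  have h0j: "?h {} j2 = ?Uj"
    using bu_out[of j ?A "{}" N] bu_busy[of a1 ?A "{}"] jk ab Ewj unfolding j2_def by auto
  have h0k: "?h {} k2 = ?Uk"
    using bu_out[of k ?A "{}" N] bu_busy[of a2 ?A "{}"] jk ab Ewk unfolding k2_def by auto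
  have P1: "Pr p01 p11 w ?A f {a1} \<le> ?q * ?Uj"
  proof -
    have "a1 \<noteq> j1" "j1 < N" using jk ab unfolding j1_def by auto
    then have vv: "valid_action N 2 {a1, j1}" using va ab by auto
    have "Pr p01 p11 w ?A f {a1} \<le> prod (?h {a1}) {a1, j1}" by (rule top[OF _ vv]) auto
    also have "\<dots> = ?q * ?Uj" using \<open>a1 \<noteq> j1\<close> h1 bu_idle[of a1 "{a1}"] by simp
    finally show ?thesis .
  qed
  have P2: "Pr p01 p11 w ?A f {a2} \<le> ?q * ?Uj"
  proof -
    have "a2 \<noteq> j2" "j2 < N" using jk ab unfolding j2_def by auto
    then have vv: "valid_action N 2 {a2, j2}" using va ab by auto
    have "Pr p01 p11 w ?A f {a2} \<le> prod (?h {a2}) {a2, j2}" by (rule top[OF _ vv]) auto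
    also have "\<dots> = ?q * ?Uj" using \<open>a2 \<noteq> j2\<close> h2 bu_idle[of a2 "{a2}"] by simp
    finally show ?thesis .
  qed
  have P3: "Pr p01 p11 w ?A f ?A \<le> ?q * ?q"
  proof -
    have vv: "valid_action N 2 ?A" using va ab by auto
    have "Pr p01 p11 w ?A f ?A \<le> prod (?h ?A) ?A" by (rule top[OF _ vv]) auto
    also have "\<dots> = ?q * ?q" using ab bu_idle[of _ ?A] by simp
    finally show ?thesis .
  qed
  have P0: "Pr p01 p11 w ?A f {} \<le> ?Uj * ?Uk"
  proof -
    have "j2 \<noteq> k2" "j2 < N" "k2 < N" using jk ab unfolding j2_def k2_def by auto
    then have vv: "valid_action N 2 {j2, k2}" using va by auto
    have "Pr p01 p11 w ?A f {} \<le> prod (?h {}) {j2, k2}" by (rule top[OF _ vv]) auto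
    also have "\<dots> = ?Uj * ?Uk" using \<open>j2 \<noteq> k2\<close> h0j h0k by simp
    finally show ?thesis .
  qed
  have w1: "0 \<le> w a1" "w a1 \<le> 1" "0 \<le> w a2" "w a2 \<le> 1" using wr ab by auto
  have c1: "w a1 * w a2 * Pr p01 p11 w ?A f ?A \<le> w a1 * w a2 * (?q * ?q)"
    using P3 w1 by (intro mult_left_mono) auto
  have c2: "w a1 * (1 - w a2) * Pr p01 p11 w ?A f {a1} \<le> w a1 * (1 - w a2) * (?q * ?Uj)"
    using P1 w1 by (intro mult_left_mono) auto
  have c3: "(1 - w a1) * w a2 * Pr p01 p11 w ?A f {a2} \<le> (1 - w a1) * w a2 * (?q * ?Uj)"
    using P2 w1 by (intro mult_left_mono) auto
  have c4: "(1 - w a1) * (1 - w a2) * Pr p01 p11 w ?A f {} \<le> (1 - w a1) * (1 - w a2) * (?Uj * ?Uk)"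
    using P0 w1 by (intro mult_left_mono) auto
  have E: "Ew N w a1 = 1 - w a1" "Ew N w a2 = 1 - w a2" using ab unfolding Ew_def by auto
  have "phi ?q (Ew N w a1) (Ew N w a2) ?Uj ?Uk = (1 - w a1)*(1 - w a2) + w a1 * w a2 * (?q * ?q)
     + w a1 * (1 - w a2) * (?q * ?Uj) + (1 - w a1) * w a2 * (?q * ?Uj) + (1 - w a1) * (1 - w a2) * (?Uj * ?Uk)"
    unfolding E phi_def by (simp add: algebra_simps power2_eq_square)
  then show ?thesis using c1 c2 c3 c4 unfolding Fv_def by linarith
qed

lemma lower:
  assumes ab: "b1 \<noteq> b2" "b1 < N" "b2 < N"
  and pol: "\<forall>S. S \<subseteq> {b1,b2} \<longrightarrow> valid_action N 2 (g S)"
  and i3: "i3 < N+2" "i3 \<notin> {b1,b2}" "\<forall>j<N+2. j \<notin> {b1,b2} \<longrightarrow> Ew N w i3 \<le> Ew N w j"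
  and i4: "i4 < N+2" "i4 \<notin> {b1,b2}" "i4 \<noteq> i3" "\<forall>j<N+2. j \<notin> {b1,b2} \<longrightarrow> j \<noteq> i3 \<longrightarrow> Ew N w i4 \<le> Ew N w j"
  and p: "0 \<le> p01" "p01 \<le> p11" "p11 \<le> 1" and wr: "\<forall>i<N. 0 \<le> w i \<and> w i \<le> 1"
  shows "phi (1-p11) (Ew N w b1) (Ew N w b2) (U p01 p11 (Ew N w i3)) (U p01 p11 (Ew N w i4)) \<le> Fv p01 p11 w b1 b2 g"
proof -
  let ?B = "{b1,b2}"
  let ?h = "\<lambda>S i. 1 - belief_update p01 p11 w ?B S i"
  let ?U3 = "U p01 p11 (Ew N w i3)" and ?U4 = "U p01 p11 (Ew N w i4)" and ?q = "1 - p11"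
  have Ew01: "0 \<le> Ew N w j" "Ew N w j \<le> 1" for j using wr unfolding Ew_def by auto
  have U3: "0 \<le> ?U3" "?U3 \<le> U p01 p11 1" using Ew01 U_nn U_mono p by auto
  have U4: "0 \<le> ?U4" "?U4 \<le> U p01 p11 1" using Ew01 U_nn U_mono p by auto
  have gS: "card (g S) = 2" "\<forall>i\<in>g S. i < N" if "S \<subseteq> ?B" for S
    using pol that unfolding valid_action_def by auto
  have hq: "?q \<le> ?h S i" if "i < N" for S i using bu_le1(2) p wr that by auto
  have q0: "0 \<le> ?q" using p by simp
  have out3: "?U3 \<le> ?h S i" if "i < N" "i \<notin> ?B" "S \<subseteq> ?B" for S i
    using bu_out[of i ?B S N p01 p11 w] that i3(3) U_mono[OF p(2)] by auto
  have out4: "?U4 \<le> ?h S i" if "i < N" "i \<notin> ?B" "i \<noteq> i3" "S \<subseteq> ?B" for S i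
    using bu_out[of i ?B S N p01 p11 w] that i4(4) U_mono[OF p(2)] by auto
  have P3: "?q * ?q \<le> Pr p01 p11 w ?B g ?B"
    unfolding Pr_def using gS[of ?B] hq q0 by (intro pair_lb[where x=b1]) auto
  have P1: "?q * ?U3 \<le> Pr p01 p11 w ?B g {b1}"
    unfolding Pr_def
  proof (rule pair_lb[where x=b1])
    show "\<forall>i\<in>g {b1}. i \<noteq> b1 \<longrightarrow> ?U3 \<le> ?h {b1} i"
    proof (intro ballI impI)
      fix i assume "i \<in> g {b1}" "i \<noteq> b1"
      then have "i < N" using gS[of "{b1}"] by auto
      show "?U3 \<le> ?h {b1} i"
      proof (cases "i = b2")
        case True then show ?thesis using bu_busy[of b2 ?B "{b1}"] ab U3 by auto
      next
        case False then show ?thesis using out3 \<open>i < N\<close> \<open>i \<noteq> b1\<close> by auto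
      qed
    qed
  qed (use gS[of "{b1}"] hq q0 U3 in auto)
  have P2: "?q * ?U3 \<le> Pr p01 p11 w ?B g {b2}"
    unfolding Pr_def
  proof (rule pair_lb[where x=b2])
    show "\<forall>i\<in>g {b2}. i \<noteq> b2 \<longrightarrow> ?U3 \<le> ?h {b2} i"
    proof (intro ballI impI)
      fix i assume "i \<in> g {b2}" "i \<noteq> b2"
      then have "i < N" using gS[of "{b2}"] by auto
      show "?U3 \<le> ?h {b2} i"
      proof (cases "i = b1")
        case True then show ?thesis using bu_busy[of b1 ?B "{b2}"] ab U3 by auto
      next
        case False then show ?thesis using out3 \<open>i < N\<close> \<open>i \<noteq> b2\<close> by auto
      qed
    qed
  qed (use gS[of "{b2}"] hq q0 U3 in auto)
  have P0: "?U3 * ?U4 \<le> Pr p01 p11 w ?B g {}"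
    unfolding Pr_def
  proof (rule pair_lb[where x=i3])
    show "\<forall>i\<in>g {}. ?U3 \<le> ?h {} i"
    proof
      fix i assume "i \<in> g {}"
      then have "i < N" using gS[of "{}"] by auto
      show "?U3 \<le> ?h {} i"
      proof (cases "i \<in> ?B")
        case True then show ?thesis using bu_busy[of i ?B "{}"] U3 by auto
      next
        case False then show ?thesis using out3 \<open>i < N\<close> by auto
      qed
    qed
    show "\<forall>i\<in>g {}. i \<noteq> i3 \<longrightarrow> ?U4 \<le> ?h {} i"
    proof (intro ballI impI)
      fix i assume "i \<in> g {}" "i \<noteq> i3"
      then have "i < N" using gS[of "{}"] by auto
      show "?U4 \<le> ?h {} i"
      proof (cases "i \<in> ?B")
        case True then show ?thesis using bu_busy[of i ?B "{}"] U4 by auto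
      next
        case False then show ?thesis using out4 \<open>i < N\<close> \<open>i \<noteq> i3\<close> by auto
      qed
    qed
  qed (use gS[of "{}"] U3 U4 in auto)
  have w1: "0 \<le> w b1" "w b1 \<le> 1" "0 \<le> w b2" "w b2 \<le> 1" using wr ab by auto
  have c1: "w b1 * w b2 * (?q * ?q) \<le> w b1 * w b2 * Pr p01 p11 w ?B g ?B"
    using P3 w1 by (intro mult_left_mono) auto
  have c2: "w b1 * (1 - w b2) * (?q * ?U3) \<le> w b1 * (1 - w b2) * Pr p01 p11 w ?B g {b1}"
    using P1 w1 by (intro mult_left_mono) auto
  have c3: "(1 - w b1) * w b2 * (?q * ?U3) \<le> (1 - w b1) * w b2 * Pr p01 p11 w ?B g {b2}"
    using P2 w1 by (intro mult_left_mono) auto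
  have c4: "(1 - w b1) * (1 - w b2) * (?U3 * ?U4) \<le> (1 - w b1) * (1 - w b2) * Pr p01 p11 w ?B g {}"
    using P0 w1 by (intro mult_left_mono) auto
  have E: "Ew N w b1 = 1 - w b1" "Ew N w b2 = 1 - w b2" using ab unfolding Ew_def by auto
  have "phi ?q (Ew N w b1) (Ew N w b2) ?U3 ?U4 = (1 - w b1)*(1 - w b2) + w b1 * w b2 * (?q * ?q)
     + w b1 * (1 - w b2) * (?q * ?U3) + (1 - w b1) * w b2 * (?q * ?U3) + (1 - w b1) * (1 - w b2) * (?U3 * ?U4)"
    unfolding E phi_def by (simp add: algebra_simps power2_eq_square)
  then show ?thesis using c1 c2 c3 c4 unfolding Fv_def by linarith
qed



lemma exmin:
  assumes "finite S" "x \<in> S"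
  shows "\<exists>m\<in>S. \<forall>y\<in>S. (f::'a \<Rightarrow> real) m \<le> f y"
proof -
  have "Min (f ` S) \<in> f ` S" using assms by (intro Min_in) auto
  then obtain m where m: "m \<in> S" "f m = Min (f ` S)" by auto
  have "\<forall>y\<in>S. f m \<le> f y" using m assms(1) by auto
  then show ?thesis using m by blast
qed

theorem theorem1:
  fixes N :: nat and p01 p11 :: real and w :: "nat \<Rightarrow> real"
    and pol :: "nat set \<times> (nat set \<Rightarrow> nat set)"
  assumes "N \<ge> 2"
    and "0 \<le> p01" "p01 \<le> 1" "0 \<le> p11" "p11 \<le> 1"
    and "p11 \<ge> p01"
    and "\<forall>i<N. 0 \<le> w i \<and> w i \<le> 1"
    and "is_myopic_policy2 N 2 p01 p11 w pol"
  shows "value2 p01 p11 w pol =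
           (SUP pol'\<in>{pol'. is_policy2 N 2 pol'}. value2 p01 p11 w pol')"
proof -
  obtain A f where pol: "pol = (A, f)" by (cases pol)
  have myoA: "myopic_action N 2 w A"
    and myoF: "\<forall>S. S \<subseteq> A \<longrightarrow> myopic_action N 2 (belief_update p01 p11 w A S) (f S)"
    using assms(8) unfolding is_myopic_policy2_def pol by auto
  have AN: "A \<subseteq> {..<N}" using myoA unfolding myopic_action_def valid_action_def by auto
  have p: "0 \<le> p01" "p01 \<le> p11" "p11 \<le> 1" using assms by auto
  note wr = assms(7)
  let ?E = "Ew N w" and ?U = "U p01 p11" and ?q = "1 - p11"
  have Ew01: "0 \<le> ?E j" "?E j \<le> 1" for j using wr unfolding Ew_def by auto
  have mext: "?E a \<le> ?E j" if "a \<in> A" "j < N+2" "j \<notin> A" for a j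
  proof (cases "j < N")
    case True
    then have "w j \<le> w a" using myoA that unfolding myopic_action_def by auto
    then show ?thesis using True that AN unfolding Ew_def by auto
  next
    case False then show ?thesis using Ew01[of a] unfolding Ew_def by auto
  qed
  have polp: "is_policy2 N 2 pol"
    using myoA myoF unfolding is_policy2_def pol myopic_action_def by auto
  have up: "2 - value2 p01 p11 w pol \<le> phi ?q (?E c) (?E d) (?U (?E j)) (?U (?E k))"
    if "A = {c,d}" "c \<noteq> d" "j \<noteq> k" "j \<notin> A" "k \<notin> A" "j < N+2" "k < N+2" for c d j k
  proof -
    have "Fv p01 p11 w c d f \<le> phi ?q (?E c) (?E d) (?U (?E j)) (?U (?E k))"
      using that AN myoF p wr by (intro upper) auto
    then show ?thesis using value2_eq[OF \<open>c \<noteq> d\<close>, of p01 p11 w f] that pol by simp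
  qed
  have key: "value2 p01 p11 w pol' \<le> value2 p01 p11 w pol" if "is_policy2 N 2 pol'" for pol'
  proof -
    obtain B g where pol': "pol' = (B, g)" by (cases pol')
    have vB: "valid_action N 2 B" and vg: "\<forall>S. S \<subseteq> B \<longrightarrow> valid_action N 2 (g S)"
      using that unfolding is_policy2_def pol' by auto
    obtain b1 b2 where B: "B = {b1,b2}" "b1 \<noteq> b2"
      using vB unfolding valid_action_def by (metis card_2_iff)
    have BN: "B \<subseteq> {..<N}" using vB unfolding valid_action_def by auto
    define C where "C = {..<N+2} - B"
    have NC: "N \<in> C" "Suc N \<in> C" using BN unfolding C_def by auto
    obtain i3 where i3: "i3 \<in> C" "\<forall>j\<in>C. ?E i3 \<le> ?E j"
      using exmin[of C N ?E] NC unfolding C_def by auto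
    have "N \<in> C - {i3} \<or> Suc N \<in> C - {i3}" using NC by auto
    then obtain x where "x \<in> C - {i3}" by blast
    then obtain i4 where i4: "i4 \<in> C - {i3}" "\<forall>j\<in>C - {i3}. ?E i4 \<le> ?E j"
      using exmin[of "C - {i3}" x ?E] unfolding C_def by auto
    have low: "phi ?q (?E c) (?E d) (?U (?E i3)) (?U (?E i4)) \<le> 2 - value2 p01 p11 w pol'"
      if "B = {c,d}" "c \<noteq> d" for c d
    proof -
      have "phi ?q (?E c) (?E d) (?U (?E i3)) (?U (?E i4)) \<le> Fv p01 p11 w c d g"
        using that BN vg p wr i3 i4 unfolding C_def by (intro lower) auto
      then show ?thesis using value2_eq[OF \<open>c \<noteq> d\<close>, of p01 p11 w g] that pol' by simp
    qed
    have i3n: "i3 \<notin> B" "i3 < N+2" and i4n: "i4 \<notin> B" "i4 < N+2" "i4 \<noteq> i3"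
      using i3 i4 unfolding C_def by auto
    have m3: "?E i3 \<le> ?E j" if "j < N+2" "j \<notin> B" for j using i3 that unfolding C_def by auto
    have m4: "?E i4 \<le> ?E j" if "j < N+2" "j \<notin> B" "j \<noteq> i3" for j using i4 that unfolding C_def by auto
    have Enn: "0 \<le> ?U (?E j)" for j using U_nn p Ew01 by auto
    obtain a1 a2 where A: "A = {a1,a2}" "a1 \<noteq> a2"
      using myoA unfolding myopic_action_def valid_action_def by (metis card_2_iff)
    have Ueq: "?U a \<le> ?U b" if "a \<le> b" for a b using U_mono p that by auto
    have claim1: "value2 p01 p11 w pol' \<le> value2 p01 p11 w pol"
      if c1: "B = {c,b'}" "A = {c,a'}" "c \<noteq> b'" "c \<noteq> a'" "b' \<notin> A" "a' \<notin> B" for c b' a'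
    proof -
      define k where "k = (if i4 \<noteq> a' then i4 else i3)"
      have k: "k \<notin> A" "k \<noteq> b'" "k < N+2" "?E k \<le> ?E i4"
        using i3n i4n c1 m3[of i4] unfolding k_def by auto
      have b': "b' < N + 2" "b' \<in> B" using BN c1 by auto
      have "2 - value2 p01 p11 w pol \<le> phi ?q (?E c) (?E a') (?U (?E b')) (?U (?E k))"
        using k b' c1 by (intro up) auto
      also have "\<dots> \<le> phi ?q (?E c) (?E a') (?U (?E b')) (?U (?E i4))"
        using Ew01 Enn k p by (intro phi_mono Ueq) auto
      also have "\<dots> \<le> phi ?q (?E c) (?E b') (?U (?E a')) (?U (?E i4))"
        using Ew01 p mext[of a' b'] c1 b' by (intro phi_S1) auto
      also have "\<dots> \<le> phi ?q (?E c) (?E b') (?U (?E i3)) (?U (?E i4))"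
      proof -
        have "?E a' \<le> ?E i3"
        proof (cases "i3 = a'")
          case False then show ?thesis using mext[of a' i3] i3n c1 by auto
        qed simp
        then show ?thesis using Ew01 Enn p by (intro phi_mono Ueq) auto
      qed
      also have "\<dots> \<le> 2 - value2 p01 p11 w pol'" using low c1 by auto
      finally show ?thesis by simp
    qed
    have claim2: "value2 p01 p11 w pol' \<le> value2 p01 p11 w pol"
      if c2: "A = {m,M}" "m \<noteq> M" "?E m \<le> ?E M" "m \<notin> B" "M \<notin> B" for m M
    proof -
      have bb: "b1 \<notin> A" "b2 \<notin> A" "b1 < N+2" "b2 < N+2" using c2 B BN by auto
      have mb: "?E m \<le> ?E b1" "?E M \<le> ?E b2" using mext bb c2 by auto
      have "2 - value2 p01 p11 w pol \<le> phi ?q (?E m) (?E M) (?U (?E b1)) (?U (?E b2))"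
        using bb c2 B by (intro up) auto
      also have "\<dots> = phi ?q (?E M) (?E m) (?U (?E b1)) (?U (?E b2))"
        by (rule phi_sym)
      also have "\<dots> \<le> phi ?q (?E M) (?E b1) (?U (?E m)) (?U (?E b2))"
        using Ew01 p mb by (intro phi_S1) auto
      also have "\<dots> \<le> phi ?q (?E b2) (?E b1) (?U (?E m)) (?U (?E M))"
        using Ew01 p mb by (intro phi_S2) auto
      also have "\<dots> = phi ?q (?E b1) (?E b2) (?U (?E m)) (?U (?E M))"
        by (rule phi_sym)
      also have "\<dots> \<le> phi ?q (?E b1) (?E b2) (?U (?E i3)) (?U (?E i4))"
      proof -
        have e3: "?E m \<le> ?E i3"
        proof (cases "i3 \<in> A")
          case True then show ?thesis using c2 by auto
        next
          case False then show ?thesis using mext[of m i3] i3n c2 by auto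
        qed
        have e4: "?E M \<le> ?E i4"
        proof (cases "i4 \<in> A")
          case False then show ?thesis using mext[of M i4] i4n c2 by auto
        next
          case True
          show ?thesis
          proof (cases "i4 = M")
            case False
            then have "i4 = m" using True c2 by auto
            have "?E i3 \<le> ?E m" using m3[of m] c2 bb AN by auto
            show ?thesis
            proof (cases "i3 \<in> A")
              case True
              then have "i3 = M" using \<open>i4 = m\<close> i4n c2 by auto
              then show ?thesis using \<open>?E i3 \<le> ?E m\<close> \<open>i4 = m\<close> by simp
            next
              case False
              then have "?E M \<le> ?E i3" using mext[of M i3] i3n c2 by auto
              then show ?thesis using \<open>?E i3 \<le> ?E m\<close> \<open>i4 = m\<close> by simp
            qed
          qed simp
        qed
        show ?thesis using Ew01 Enn p e3 e4 by (intro phi_mono Ueq) auto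
      qed
      also have "\<dots> \<le> 2 - value2 p01 p11 w pol'" using low B by auto
      finally show ?thesis by simp
    qed
    show ?thesis
    proof (cases "b1 \<in> A \<and> b2 \<in> A")
      case True
      then have AB: "A = B" using A B by auto
      have "2 - value2 p01 p11 w pol \<le> phi ?q (?E b1) (?E b2) (?U (?E i3)) (?U (?E i4))"
        using AB B i3n i4n by (intro up) auto
      also have "\<dots> \<le> 2 - value2 p01 p11 w pol'" using low B by auto
      finally show ?thesis by simp
    next
      case False
      show ?thesis
      proof (cases "b1 \<in> A")
        case True
        then have "b2 \<notin> A" using False by auto
        obtain a' where "A = {b1, a'}" "b1 \<noteq> a'" using True A by auto
        then show ?thesis using claim1[of b1 b2 a'] B \<open>b2 \<notin> A\<close> by auto
      next
        case nb1: False
        show ?thesis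
        proof (cases "b2 \<in> A")
          case True
          obtain a' where "A = {b2, a'}" "b2 \<noteq> a'" using True A by auto
          then show ?thesis using claim1[of b2 b1 a'] B nb1 by auto
        next
          case nb2: False
          have "a1 \<notin> B" "a2 \<notin> B" using nb1 nb2 A B by auto
          show ?thesis
          proof (cases "?E a1 \<le> ?E a2")
            case True then show ?thesis using claim2[of a1 a2] A \<open>a1 \<notin> B\<close> \<open>a2 \<notin> B\<close> by auto
          next
            case False then show ?thesis using claim2[of a2 a1] A \<open>a1 \<notin> B\<close> \<open>a2 \<notin> B\<close>
              by (auto simp: insert_commute)
          qed
        qed
      qed
    qed
  qed
  show ?thesis
    by (rule cSup_eq_maximum[symmetric]) (use polp key in auto)
qed


end
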